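(* Let $q \in Q$ and suppose $R_q$ contains a single simple path. Then the polytope $U(\mathcal{C}_q) = \{ x \in [0,1]^{|N|} : \sum_{j \in S} x_j \ge 1 \ \forall S \in \mathcal{C}_q\}$ is integral.
   Context: Let $G=(N,A)$ be a finite undirected graph with edge lengths $\ell_e > 0$, and let $d>0$ be the travel range, with $\ell_e \le d$ for every edge. A path is a sequence $r=(v_0,v_1,\dots,v_m)$, $m\ge 1$, of nodes in which consecutive nodes are joined by an edge (nodes may repeat); $r$ is simple if its nodes are distinct. For $x \in \{0,1\}^N$ ($x_j = 1$ meaning a charging station at node $j$), path $r$ is repeatedly traversable under $x$ if, letting $W=(v_0,\dots,v_m,v_{m-1},\dots,v_0)$ be the round trip along $r$, at least one node of $r$ has $x_j=1$ and, in the infinite periodic repetition of $W$, the distance travelled between any two consecutive visits to nodes with a station is at most $d$. Let $Q$ be a finite set of demands; each $q\in Q$ has a finite nonempty set $R_q$ of paths. For each $q \in Q$ and $r \in R_q$, $\mathcal{D}_{q,r}\subseteq 2^N$ is a family of node sets such that for every $x \in \{0,1\}^N$: $r$ is repeatedly traversable under $x$ if and only if $\sum_{j\in S} x_j \ge 1$ for all $S \in \mathcal{D}_{q,r}$. Define $\mathcal{C}_q = \{ \bigcup_{r \in R_q} S_r : S_r \in \mathcal{D}_{q,r} \text{ for each } r \in R_q\}$. *)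

theory Defs
  imports "HOL-Analysis.Analysis"
begin

text \<open>Nodes are the elements of a finite type 'n (so N = UNIV); edges of the undirected
graph are 2-element node sets; a station vector is x :: real^'n with entries in {0,1}.\<close>

definition is_path :: "'n set set \<Rightarrow> 'n list \<Rightarrow> bool" where
  "is_path A r \<longleftrightarrow> length r \<ge> 2 \<and> (\<forall>k. Suc k < length r \<longrightarrow> {r ! k, r ! Suc k} \<in> A)"

definition simple_node_path :: "'n list \<Rightarrow> bool" where
  "simple_node_path r \<longleftrightarrow> distinct r"

text \<open>Round trip (v0,...,vm,v_{m-1},...,v0) as a closed walk; its cyclic node sequence
(v0,...,vm,v_{m-1},...,v1) of length 2m, and its infinite periodic repetition.\<close>
definition round_cycle :: "'n list \<Rightarrow> 'n list" where
  "round_cycle r = r @ tl (butlast (rev r))"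

definition periodic_walk :: "'n list \<Rightarrow> nat \<Rightarrow> 'n" where
  "periodic_walk r k = round_cycle r ! (k mod length (round_cycle r))"

definition walk_dist :: "('n set \<Rightarrow> real) \<Rightarrow> 'n list \<Rightarrow> nat \<Rightarrow> nat \<Rightarrow> real" where
  "walk_dist len r i j = (\<Sum>k\<in>{i..<j}. len {periodic_walk r k, periodic_walk r (Suc k)})"

definition rep_traversable ::
  "('n set \<Rightarrow> real) \<Rightarrow> real \<Rightarrow> 'n list \<Rightarrow> real^'n \<Rightarrow> bool" where
  "rep_traversable len d r x \<longleftrightarrow>
     (\<exists>j\<in>set r. x $ j = 1) \<and>
     (\<forall>i j. i < j \<and> x $ (periodic_walk r i) = 1 \<and> x $ (periodic_walk r j) = 1 \<and>
            (\<forall>k. i < k \<and> k < j \<longrightarrow> x $ (periodic_walk r k) \<noteq> 1)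
            \<longrightarrow> walk_dist len r i j \<le> d)"

definition binary_vec :: "real^'n \<Rightarrow> bool" where
  "binary_vec x \<longleftrightarrow> (\<forall>j. x $ j \<in> {0, 1})"

definition cover_family :: "'r set \<Rightarrow> ('r \<Rightarrow> 'n set set) \<Rightarrow> 'n set set" where
  "cover_family R D = {\<Union>r\<in>R. S r | S. \<forall>r\<in>R. S r \<in> D r}"

definition U_poly :: "'n set set \<Rightarrow> (real^'n) set" where
  "U_poly C = {x. (\<forall>j. 0 \<le> x $ j \<and> x $ j \<le> 1) \<and> (\<forall>S\<in>C. (\<Sum>j\<in>S. x $ j) \<ge> 1)}"

definition integral_polytope :: "(real^'n) set \<Rightarrow> bool" where
  "integral_polytope P \<longleftrightarrow> (\<forall>v. v extreme_point_of P \<longrightarrow> (\<forall>j. v $ j \<in> \<int>))"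

end

theory Submission
  imports Defs
begin


lemma perturb_not_extreme:
  fixes v w :: "real^'n::finite" and C :: "'n set set"
  assumes vP: "v \<in> U_poly C" and w0: "w \<noteq> 0"
    and wb: "\<forall>j. (v$j = 0 \<or> v$j = 1) \<longrightarrow> w$j = 0"
    and wt: "\<forall>S\<in>C. (\<Sum>j\<in>S. v$j) = 1 \<longrightarrow> (\<Sum>j\<in>S. w$j) = 0"
    and wa: "\<forall>j. \<bar>w$j\<bar> \<le> 1"
  shows "\<not> v extreme_point_of U_poly C"
proof -
  have bnd: "\<forall>j. 0 \<le> v$j \<and> v$j \<le> 1" and cs: "\<forall>S\<in>C. (\<Sum>j\<in>S. v$j) \<ge> 1"
    using vP by (auto simp: U_poly_def)
  have finC: "finite C" by (rule finite_subset[of _ "Pow UNIV"]) auto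
  define K where "K = real CARD('n)"
  have Kpos: "K > 0" unfolding K_def by simp
  have e1: "\<forall>j\<in>UNIV. eventually (\<lambda>e. (v$j \<noteq> 0 \<and> v$j \<noteq> 1) \<longrightarrow> e \<le> v$j \<and> e \<le> 1 - v$j) (at_right (0::real))"
  proof
    fix j :: 'n
    show "eventually (\<lambda>e. (v$j \<noteq> 0 \<and> v$j \<noteq> 1) \<longrightarrow> e \<le> v$j \<and> e \<le> 1 - v$j) (at_right (0::real))"
    proof (cases "v$j \<noteq> 0 \<and> v$j \<noteq> 1")
      case True
      then have "0 < min (v$j) (1 - v$j)" using bnd[rule_format, of j] by auto
      then show ?thesis unfolding eventually_at_right_field
        by (intro exI[of _ "min (v$j) (1 - v$j)"]) auto
    qed auto
  qed
  have e2: "\<forall>S\<in>C. eventually (\<lambda>e. (\<Sum>j\<in>S. v$j) \<noteq> 1 \<longrightarrow> e * K \<le> (\<Sum>j\<in>S. v$j) - 1) (at_right (0::real))"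
  proof
    fix S assume "S \<in> C"
    show "eventually (\<lambda>e. (\<Sum>j\<in>S. v$j) \<noteq> 1 \<longrightarrow> e * K \<le> (\<Sum>j\<in>S. v$j) - 1) (at_right (0::real))"
    proof (cases "(\<Sum>j\<in>S. v$j) \<noteq> 1")
      case True
      then have p: "0 < ((\<Sum>j\<in>S. v$j) - 1) / K" using cs \<open>S \<in> C\<close> Kpos by force
      show ?thesis unfolding eventually_at_right_field
      proof (intro exI[of _ "((\<Sum>j\<in>S. v$j) - 1) / K"] conjI allI impI)
        fix y :: real assume "0 < y" "y < ((\<Sum>j\<in>S. v$j) - 1) / K"
        then show "y * K \<le> (\<Sum>j\<in>S. v$j) - 1" using Kpos by (simp add: field_simps)
      qed (use p in auto)
    qed auto
  qed
  have "eventually (\<lambda>e. (\<forall>j\<in>UNIV. (v$j \<noteq> 0 \<and> v$j \<noteq> 1) \<longrightarrow> e \<le> v$j \<and> e \<le> 1 - v$j) \<and>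
      (\<forall>S\<in>C. (\<Sum>j\<in>S. v$j) \<noteq> 1 \<longrightarrow> e * K \<le> (\<Sum>j\<in>S. v$j) - 1)) (at_right (0::real))"
    using eventually_ball_finite[OF finite_class.finite_UNIV e1] eventually_ball_finite[OF finC e2]
    by (rule eventually_conj)
  then obtain b where "b > 0" and bb: "\<forall>y>0. y < b \<longrightarrow> (\<forall>j\<in>UNIV. (v$j \<noteq> 0 \<and> v$j \<noteq> 1) \<longrightarrow> y \<le> v$j \<and> y \<le> 1 - v$j) \<and>
      (\<forall>S\<in>C. (\<Sum>j\<in>S. v$j) \<noteq> 1 \<longrightarrow> y * K \<le> (\<Sum>j\<in>S. v$j) - 1)"
    unfolding eventually_at_right_field by auto
  define e where "e = b / 2"
  have epos: "e > 0" and eb: "e < b" using \<open>b > 0\<close> by (auto simp: e_def)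
  have E1: "\<And>j. (v$j \<noteq> 0 \<and> v$j \<noteq> 1) \<Longrightarrow> e \<le> v$j \<and> e \<le> 1 - v$j" using bb epos eb by blast
  have E2: "\<And>S. S \<in> C \<Longrightarrow> (\<Sum>j\<in>S. v$j) \<noteq> 1 \<Longrightarrow> e * K \<le> (\<Sum>j\<in>S. v$j) - 1" using bb epos eb by blast
  have mem: "v + (s * e) *\<^sub>R w \<in> U_poly C" if s: "\<bar>s\<bar> \<le> 1" for s
    unfolding U_poly_def
  proof (intro CollectI conjI allI ballI)
    fix j :: 'n
    have "\<bar>s * e * w$j\<bar> \<le> e"
    proof -
      have "\<bar>s * e * w$j\<bar> = \<bar>s\<bar> * e * \<bar>w$j\<bar>" using epos by (simp add: abs_mult)
      also have "\<dots> \<le> 1 * e * 1"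
        using s wa[rule_format, of j] epos by (intro mult_mono) auto
      finally show ?thesis by simp
    qed
    then show "0 \<le> (v + (s * e) *\<^sub>R w) $ j" "(v + (s * e) *\<^sub>R w) $ j \<le> 1"
      using E1[of j] wb[rule_format, of j] bnd[rule_format, of j]
      by (cases "v$j = 0 \<or> v$j = 1"; auto simp: abs_le_iff)+
  next
    fix S assume SC: "S \<in> C"
    have eq: "(\<Sum>j\<in>S. (v + (s * e) *\<^sub>R w) $ j) = (\<Sum>j\<in>S. v$j) + s * e * (\<Sum>j\<in>S. w$j)"
      by (simp add: sum.distrib sum_distrib_left mult.assoc)
    show "1 \<le> (\<Sum>j\<in>S. (v + (s * e) *\<^sub>R w) $ j)"
    proof (cases "(\<Sum>j\<in>S. v$j) = 1")
      case True
      then show ?thesis using eq wt SC by simp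
    next
      case False
      have "\<bar>\<Sum>j\<in>S. w$j\<bar> \<le> (\<Sum>j\<in>S. \<bar>w$j\<bar>)" by (rule sum_abs)
      also have "\<dots> \<le> (\<Sum>j\<in>S. 1)" using wa by (intro sum_mono) auto
      also have "\<dots> = real (card S)" by simp
      also have "\<dots> \<le> K" unfolding K_def by (simp add: card_mono)
      finally have sw: "\<bar>\<Sum>j\<in>S. w$j\<bar> \<le> K" .
      have "\<bar>s * e * (\<Sum>j\<in>S. w$j)\<bar> = \<bar>s\<bar> * e * \<bar>\<Sum>j\<in>S. w$j\<bar>" using epos by (simp add: abs_mult)
      also have "\<dots> \<le> 1 * e * K" using s sw epos by (intro mult_mono) auto
      finally have "\<bar>s * e * (\<Sum>j\<in>S. w$j)\<bar> \<le> e * K" by simp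
      then show ?thesis using eq E2[OF SC False] by (auto simp: abs_le_iff)
    qed
  qed
  define a where "a = v + ((-1) * e) *\<^sub>R w"
  define c where "c = v + (1 * e) *\<^sub>R w"
  have aP: "a \<in> U_poly C" unfolding a_def by (rule mem) simp
  have cP: "c \<in> U_poly C" unfolding c_def by (rule mem) simp
  have "a \<noteq> c"
  proof
    assume ac: "a = c"
    obtain j where "w$j \<noteq> 0" using w0 by (metis vec_eq_iff zero_index)
    moreover have "a$j = c$j" using ac by simp
    ultimately show False using epos by (simp add: a_def c_def)
  qed
  then have "midpoint a c \<in> open_segment a c" by (simp add: midpoint_in_open_segment)
  moreover have "midpoint a c = v" unfolding midpoint_def a_def c_def
    by (simp add: algebra_simps scaleR_2[symmetric])
  ultimately show ?thesis using aP cP unfolding extreme_point_of_def by metis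
qed



definition idx :: "nat \<Rightarrow> nat \<Rightarrow> nat" where
  "idx n p = (let k = p mod (2*n-2) in if k < n then k else 2*n-2-k)"

lemma rc_nth:
  assumes n2: "length r \<ge> 2" and k: "k < 2 * length r - 2"
  shows "round_cycle r ! k = r ! (if k < length r then k else 2 * length r - 2 - k)"
proof (cases "k < length r")
  case True then show ?thesis by (simp add: round_cycle_def nth_append)
next
  case False
  let ?n = "length r"
  have "round_cycle r ! k = tl (butlast (rev r)) ! (k - ?n)"
    using False by (simp add: round_cycle_def nth_append)
  also have "\<dots> = rev (tl r) ! (Suc (k - ?n))"
    using False k n2 by (simp add: nth_tl)
  also have "\<dots> = tl r ! (?n - 2 - Suc (k - ?n))"
    using False k n2 by (simp add: rev_nth)
  also have "\<dots> = r ! Suc (?n - 2 - Suc (k - ?n))"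
    by (rule nth_tl) (use False k n2 in simp)
  also have "\<dots> = r ! (?n - 1 - Suc (k - ?n))"
  proof -
    have "Suc (?n - 2 - Suc (k - ?n)) = ?n - 1 - Suc (k - ?n)" using False k n2 by arith
    then show ?thesis by (simp only:)
  qed
  also have "?n - 1 - Suc (k - ?n) = 2 * ?n - 2 - k" using False k n2 by simp
  finally show ?thesis using False by simp
qed

lemma rc_len: "length r \<ge> 2 \<Longrightarrow> length (round_cycle r) = 2 * length r - 2"
  by (simp add: round_cycle_def)

lemma pw_idx:
  assumes n2: "length r \<ge> 2"
  shows "periodic_walk r p = r ! idx (length r) p \<and> idx (length r) p < length r"
proof -
  let ?n = "length r"
  have L: "2 * ?n - 2 > 0" using n2 by simp
  have k: "p mod (2 * ?n - 2) < 2 * ?n - 2" using L by simp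
  show ?thesis
    unfolding periodic_walk_def rc_len[OF n2] idx_def Let_def
    using rc_nth[OF n2 k] k n2 by auto
qed

lemma idx_step:
  assumes n2: "n \<ge> 2"
  shows "idx n (Suc p) \<le> idx n p + 1 \<and> idx n p \<le> idx n (Suc p) + 1"
proof -
  define L where "L = 2*n-2"
  define k where "k = p mod L"
  have L: "L > 0" using n2 by (simp add: L_def)
  have kL: "k < L" using L by (simp add: k_def)
  have eq1: "idx n p = (if k < n then k else L - k)" by (simp add: idx_def Let_def L_def k_def)
  show ?thesis
  proof (cases "Suc k = L")
    case True
    then have "Suc p mod L = 0" unfolding k_def by (metis mod_Suc)
    then have eq2: "idx n (Suc p) = 0" by (simp add: idx_def Let_def L_def)
    have "idx n p = 1" unfolding eq1 using True n2 unfolding L_def by auto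
    then show ?thesis using eq2 by simp
  next
    case False
    then have "Suc p mod L = Suc k" unfolding k_def by (metis mod_Suc)
    then have eq2: "idx n (Suc p) = (if Suc k < n then Suc k else L - Suc k)"
      by (simp add: idx_def Let_def L_def)
    show ?thesis unfolding eq1 eq2
    proof (cases "Suc k < n")
      case True then show "(if Suc k < n then Suc k else L - Suc k) \<le> (if k < n then k else L - k) + 1 \<and>
        (if k < n then k else L - k) \<le> (if Suc k < n then Suc k else L - Suc k) + 1" by simp
    next
      case F2: False
      have "Suc k < L" using False kL by simp
      then show "(if Suc k < n then Suc k else L - Suc k) \<le> (if k < n then k else L - k) + 1 \<and>
        (if k < n then k else L - k) \<le> (if Suc k < n then Suc k else L - Suc k) + 1"
        using F2 n2 unfolding L_def by (cases "k < n") auto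
    qed
  qed
qed

lemma discrete_ivt:
  fixes f :: "nat \<Rightarrow> nat"
  assumes st: "\<forall>p. f (Suc p) \<le> f p + 1 \<and> f p \<le> f (Suc p) + 1" and ab: "a \<le> b"
  shows "\<exists>lo hi. lo \<le> hi \<and> f ` {a..b} = {lo..hi}"
  using ab
proof (induction b)
  case 0
  then have "f ` {a..0} = {f 0..f 0}" by simp
  then show ?case by blast
next
  case (Suc b)
  show ?case
  proof (cases "a = Suc b")
    case True
    then have "f ` {a..Suc b} = {f (Suc b)..f (Suc b)}" by simp
    then show ?thesis by blast
  next
    case False
    then have "a \<le> b" using Suc.prems by simp
    then obtain lo hi where lh: "lo \<le> hi" "f ` {a..b} = {lo..hi}" using Suc.IH by blast
    have "f b \<in> f ` {a..b}" using \<open>a \<le> b\<close> by simp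
    then have fb: "f b \<in> {lo..hi}" using lh(2) by simp
    have "{a..Suc b} = insert (Suc b) {a..b}" using \<open>a \<le> b\<close> by auto
    then have "f ` {a..Suc b} = insert (f (Suc b)) {lo..hi}" using lh by simp
    also have "\<dots> = {min lo (f (Suc b))..max hi (f (Suc b))}"
    proof -
      have "f (Suc b) \<le> f b + 1" "f b \<le> f (Suc b) + 1" using st[rule_format, of b] by simp_all
      moreover have "lo \<le> f b" "f b \<le> hi" using fb by simp_all
      ultimately show ?thesis
        unfolding set_eq_iff atLeastAtMost_iff insert_iff min_def max_def
        by (intro allI) (auto; linarith)
    qed
    finally have "f ` {a..Suc b} = {min lo (f (Suc b))..max hi (f (Suc b))}" .
    moreover have "min lo (f (Suc b)) \<le> max hi (f (Suc b))" using lh(1) by (simp add: le_max_iff_disj min_le_iff_disj)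
    ultimately show ?thesis by blast
  qed
qed

definition ind :: "'n set \<Rightarrow> real^'n::finite" where
  "ind G = (\<chi> j. if j \<in> G then 0 else 1)"

lemma ind_binary: "binary_vec (ind G)"
  by (simp add: binary_vec_def ind_def)

lemma ind_sub:
  assumes "(\<Sum>j\<in>S. ind G $ j) < 1"
  shows "S \<subseteq> (G :: ('n::finite) set)"
proof
  fix x assume "x \<in> S"
  show "x \<in> G"
  proof (rule ccontr)
    assume "x \<notin> G"
    have "ind G $ x \<le> (\<Sum>j\<in>S. ind G $ j)"
      by (rule member_le_sum) (use \<open>x \<in> S\<close> in \<open>auto simp: ind_def\<close>)
    then show False using assms \<open>x \<notin> G\<close> by (simp add: ind_def)
  qed
qed

lemma sub_from_nontrav:
  fixes DD :: "('n::finite) set set"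
  assumes Dc: "\<forall>x. binary_vec x \<longrightarrow> (rep_traversable len d r x \<longleftrightarrow> (\<forall>S\<in>DD. (\<Sum>j\<in>S. x $ j) \<ge> 1))"
    and nt: "\<not> rep_traversable len d r (ind G)"
  shows "\<exists>S'\<in>DD. S' \<subseteq> G"
proof -
  from nt Dc ind_binary obtain S' where "S' \<in> DD" "\<not> (\<Sum>j\<in>S'. ind G $ j) \<ge> 1" by blast
  then show ?thesis using ind_sub[where S=S' and G=G] by auto
qed

lemma key:
  fixes DD :: "('n::finite) set set"
  assumes n2: "length r \<ge> 2"
    and Dc: "\<forall>x. binary_vec x \<longrightarrow> (rep_traversable len d r x \<longleftrightarrow> (\<forall>S\<in>DD. (\<Sum>j\<in>S. x $ j) \<ge> 1))"
    and SD: "S \<in> DD"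
  shows "\<exists>G. G \<subseteq> S \<and> (\<exists>S'\<in>DD. S' \<subseteq> G) \<and>
     (G = {} \<or> (\<exists>lo hi. lo \<le> hi \<and> hi < length r \<and> G = (!) r ` {lo..hi}))"
proof -
  have "(\<Sum>j\<in>S. ind S $ j) = 0" by (simp add: ind_def)
  then have nt: "\<not> rep_traversable len d r (ind S)" using Dc ind_binary SD by force
  show ?thesis
  proof (cases "\<exists>j\<in>set r. ind S $ j = 1")
    case False
    then have sub: "set r \<subseteq> S" by (auto simp: ind_def split: if_splits)
    have "\<not> rep_traversable len d r (ind (set r))"
      unfolding rep_traversable_def by (auto simp: ind_def)
    then obtain S' where "S' \<in> DD" "S' \<subseteq> set r" using sub_from_nontrav[OF Dc] by blast
    moreover have "set r = (!) r ` {0..length r - 1}"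
      using n2 by (auto simp: set_conv_nth image_def)
    moreover have "\<exists>lo hi. lo \<le> hi \<and> hi < length r \<and> set r = (!) r ` {lo..hi}"
      using n2 \<open>set r = (!) r ` {0..length r - 1}\<close> by (intro exI[of _ 0] exI[of _ "length r - 1"]) auto
    ultimately show ?thesis using sub by blast
  next
    case True
    with nt obtain i j where ij: "i < j" "ind S $ (periodic_walk r i) = 1" "ind S $ (periodic_walk r j) = 1"
      "\<forall>k. i < k \<and> k < j \<longrightarrow> ind S $ (periodic_walk r k) \<noteq> 1" "\<not> walk_dist len r i j \<le> d"
      unfolding rep_traversable_def by blast
    define G where "G = periodic_walk r ` {i<..<j}"
    have GS: "G \<subseteq> S" using ij(4) by (auto simp: G_def ind_def split: if_splits)
    have niS: "periodic_walk r i \<notin> S" "periodic_walk r j \<notin> S" using ij(2,3) by (auto simp: ind_def)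
    have "\<not> rep_traversable len d r (ind G)"
      unfolding rep_traversable_def
    proof (intro notI, elim conjE)
      assume "\<forall>i j. i < j \<and> ind G $ periodic_walk r i = 1 \<and> ind G $ periodic_walk r j = 1 \<and>
           (\<forall>k. i < k \<and> k < j \<longrightarrow> ind G $ periodic_walk r k \<noteq> 1) \<longrightarrow>
           walk_dist len r i j \<le> d"
      moreover have "ind G $ periodic_walk r i = 1" "ind G $ periodic_walk r j = 1"
        using niS GS by (auto simp: ind_def)
      moreover have "\<forall>k. i < k \<and> k < j \<longrightarrow> ind G $ periodic_walk r k \<noteq> 1"
        by (auto simp: ind_def G_def)
      ultimately show False using ij(1,5) by blast
    qed
    then obtain S' where S': "S' \<in> DD" "S' \<subseteq> G" using sub_from_nontrav[OF Dc] by blast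
    have "G = {} \<or> (\<exists>lo hi. lo \<le> hi \<and> hi < length r \<and> G = (!) r ` {lo..hi})"
    proof (cases "Suc i < j")
      case False
      then have "{i<..<j} = {}" by auto
      then show ?thesis by (simp add: G_def)
    next
      case True
      then have iv: "{i<..<j} = {Suc i..j - 1}" by auto
      have "\<exists>lo hi. lo \<le> hi \<and> idx (length r) ` {Suc i..j-1} = {lo..hi}"
        by (rule discrete_ivt) (use idx_step[OF n2] True in auto)
      then obtain lo hi where lh: "lo \<le> hi" "idx (length r) ` {Suc i..j-1} = {lo..hi}" by blast
      have "G = (!) r ` (idx (length r) ` {Suc i..j-1})"
        unfolding G_def iv image_image using pw_idx[OF n2] by simp
      also have "\<dots> = (!) r ` {lo..hi}" using lh by simp
      finally have "G = (!) r ` {lo..hi}" .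
      moreover have "hi < length r"
      proof -
        have "hi \<in> idx (length r) ` {Suc i..j-1}" using lh by auto
        then show ?thesis using pw_idx[OF n2] by auto
      qed
      ultimately show ?thesis using lh by blast
    qed
    then show ?thesis using GS S' by blast
  qed
qed



lemma cover_single: "cover_family {r0} D' = D' r0"
proof
  show "cover_family {r0} D' \<subseteq> D' r0" by (auto simp: cover_family_def)
  show "D' r0 \<subseteq> cover_family {r0} D'"
  proof
    fix T assume "T \<in> D' r0"
    then show "T \<in> cover_family {r0} D'" unfolding cover_family_def
      by (intro CollectI exI[of _ "\<lambda>_. T"]) auto
  qed
qed

lemma main_integral:
  fixes DD :: "('n::finite) set set" and r :: "'n list"
  assumes n2: "length r \<ge> 2" and dist: "distinct r"
    and Dc: "\<forall>x. binary_vec x \<longrightarrow> (rep_traversable len d r x \<longleftrightarrow> (\<forall>S\<in>DD. (\<Sum>j\<in>S. x $ j) \<ge> 1))"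
    and ext: "v extreme_point_of U_poly DD"
  shows "\<forall>j. v $ j \<in> \<int>"
proof (rule ccontr)
  assume nint: "\<not> (\<forall>j. v $ j \<in> \<int>)"
  let ?n = "length r"
  have vP: "v \<in> U_poly DD" using ext by (simp add: extreme_point_of_def)
  have bnd: "\<forall>j. 0 \<le> v$j \<and> v$j \<le> 1" and cs: "\<forall>S\<in>DD. (\<Sum>j\<in>S. v$j) \<ge> 1"
    using vP by (auto simp: U_poly_def)
  have inj: "inj_on ((!) r) {lo..hi}" if "hi < ?n" for lo hi
    using dist that by (intro inj_on_nth) auto
  have tight: "\<exists>lo hi. lo \<le> hi \<and> hi < ?n \<and> (!) r ` {lo..hi} \<subseteq> S \<and>
        (\<Sum>k=lo..hi. v $ (r!k)) = 1 \<and> (\<forall>j\<in>S - (!) r ` {lo..hi}. v$j = 0)"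
    if SD: "S \<in> DD" and S1: "(\<Sum>j\<in>S. v$j) = 1" for S
  proof -
    obtain G S' where GS: "G \<subseteq> S" and S': "S' \<in> DD" "S' \<subseteq> G"
      and Gi: "G = {} \<or> (\<exists>lo hi. lo \<le> hi \<and> hi < ?n \<and> G = (!) r ` {lo..hi})"
      using key[OF n2 Dc SD] by blast
    have "1 \<le> (\<Sum>j\<in>S'. v$j)" using cs S' by blast
    also have "\<dots> \<le> (\<Sum>j\<in>G. v$j)" using S' bnd by (intro sum_mono2) auto
    finally have g1: "1 \<le> (\<Sum>j\<in>G. v$j)" .
    have split: "(\<Sum>j\<in>S. v$j) = (\<Sum>j\<in>G. v$j) + (\<Sum>j\<in>S - G. v$j)"
      using GS by (metis add.commute finite sum.subset_diff)
    have "0 \<le> (\<Sum>j\<in>S - G. v$j)" using bnd by (intro sum_nonneg) auto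
    then have gG: "(\<Sum>j\<in>G. v$j) = 1" and z: "(\<Sum>j\<in>S - G. v$j) = 0" using split S1 g1 by linarith+
    have "(\<Sum>j\<in>S - G. v$j) = 0 \<longleftrightarrow> (\<forall>j\<in>S - G. v$j = 0)"
      by (rule sum_nonneg_eq_0_iff) (use bnd in auto)
    then have zero: "\<forall>j\<in>S - G. v$j = 0" using z by blast
    have "G \<noteq> {}" using gG by auto
    then obtain lo hi where lh: "lo \<le> hi" "hi < ?n" "G = (!) r ` {lo..hi}" using Gi by blast
    have "(\<Sum>j\<in>G. v$j) = (\<Sum>k=lo..hi. v $ (r!k))"
      unfolding lh(3) by (subst sum.reindex[OF inj[OF lh(2)]]) simp
    then have e: "(\<Sum>k=lo..hi. v $ (r!k)) = 1" using gG by simp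
    have GS': "(!) r ` {lo..hi} \<subseteq> S" using GS lh(3) by simp
    have zero': "\<forall>j\<in>S - (!) r ` {lo..hi}. v$j = 0" using zero lh(3) by simp
    show ?thesis using lh(1,2) GS' zero' e by blast
  qed
  show False
  proof (cases "\<exists>j. j \<notin> set r \<and> v$j \<notin> \<int>")
    case True
    then obtain j0 where j0: "j0 \<notin> set r" "v$j0 \<notin> \<int>" by blast
    define w :: "real^'n" where "w = (\<chi> i. if i = j0 then 1 else 0)"
    have "\<not> v extreme_point_of U_poly DD"
    proof (rule perturb_not_extreme[OF vP])
      have "w $ j0 = 1" by (simp add: w_def)
      then show "w \<noteq> 0" by (metis zero_index zero_neq_one)
      show "\<forall>j. v $ j = 0 \<or> v $ j = 1 \<longrightarrow> w $ j = 0" using j0 by (auto simp: w_def)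
      show "\<forall>j. \<bar>w $ j\<bar> \<le> 1" by (simp add: w_def)
      show "\<forall>S\<in>DD. (\<Sum>j\<in>S. v $ j) = 1 \<longrightarrow> (\<Sum>j\<in>S. w $ j) = 0"
      proof (intro ballI impI)
        fix S assume SD: "S \<in> DD" and S1: "(\<Sum>j\<in>S. v $ j) = 1"
        obtain lo hi where lh: "(!) r ` {lo..hi} \<subseteq> S" "\<forall>j\<in>S - (!) r ` {lo..hi}. v$j = 0" "hi < ?n"
          using tight[OF SD S1] by blast
        have "j0 \<notin> S"
        proof
          assume "j0 \<in> S"
          moreover have "j0 \<notin> (!) r ` {lo..hi}" using j0(1) lh(3) by auto
          ultimately have "v$j0 = 0" using lh(2) by blast
          then show False using j0(2) by simp
        qed
        then show "(\<Sum>j\<in>S. w $ j) = 0" unfolding w_def by (intro sum.neutral) auto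
      qed
    qed
    then show False using ext by blast
  next
    case False
    then have offint: "\<And>j. j \<notin> set r \<Longrightarrow> v$j \<in> \<int>" by blast
    obtain j0 where "v$j0 \<notin> \<int>" using nint by blast
    then have "j0 \<in> set r" using offint by blast
    then obtain k1 where "k1 < ?n" "v $ (r!k1) \<notin> \<int>" using \<open>v$j0 \<notin> \<int>\<close> by (metis in_set_conv_nth)
    then have ex: "\<exists>k. k < ?n \<and> v $ (r!k) \<notin> \<int>" by blast
    define k0 where "k0 = (LEAST k. k < ?n \<and> v $ (r!k) \<notin> \<int>)"
    have k0: "k0 < ?n" "v $ (r!k0) \<notin> \<int>" using LeastI_ex[OF ex] unfolding k0_def by auto
    have before: "\<And>i. i < k0 \<Longrightarrow> v $ (r!i) \<in> \<int>"
      using not_less_Least k0(1) unfolding k0_def by fastforce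
    define y where "y k = (\<Sum>i<k. v $ (r!i))" for k
    have ySuc: "y (Suc k) = y k + v $ (r!k)" for k by (simp add: y_def)
    have yk0: "y k0 \<in> \<int>" unfolding y_def using before by (intro Ints_sum) auto
    define t where "t = frac (y (Suc k0))"
    have "y (Suc k0) \<notin> \<int>"
    proof
      assume "y (Suc k0) \<in> \<int>"
      then have "y (Suc k0) - y k0 \<in> \<int>" using yk0 by (rule Ints_diff)
      then show False using k0(2) by (simp add: ySuc)
    qed
    then have t0: "t \<noteq> 0" unfolding t_def by (simp add: frac_eq_0_iff)
    have fk0: "frac (y k0) = 0" using yk0 by (simp add: frac_eq_0_iff)
    define g where "g k = (if frac (y k) = t then 1 else 0 :: real)" for k
    define w :: "real^'n" where "w = (\<chi> j. \<Sum>k\<in>{k. k < ?n \<and> r!k = j}. g (Suc k) - g k)"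
    have wr: "w $ (r!k) = g (Suc k) - g k" if "k < ?n" for k
    proof -
      have "{k'. k' < ?n \<and> r!k' = r!k} = {k}" using dist that by (auto simp: nth_eq_iff_index_eq)
      then show ?thesis by (simp add: w_def)
    qed
    have woff: "w $ j = 0" if "j \<notin> set r" for j
    proof -
      have E: "{k'. k' < ?n \<and> r!k' = j} = {}" using that by (auto simp: in_set_conv_nth)
      show ?thesis unfolding w_def vec_lambda_beta E by simp
    qed
    have w01: "w $ j = 0" if "v$j = 0 \<or> v$j = 1" for j
    proof (cases "j \<in> set r")
      case True
      then obtain k where k: "k < ?n" "r!k = j" by (auto simp: in_set_conv_nth)
      have "frac (y (Suc k)) = frac (y k)"
      proof (rule frac_diff_zero)
        show "frac (y (Suc k) - y k) = 0" using that k by (auto simp: ySuc)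
      qed
      then show ?thesis using wr[OF k(1)] k(2) by (simp add: g_def)
    qed (simp add: woff)
    have "\<not> v extreme_point_of U_poly DD"
    proof (rule perturb_not_extreme[OF vP])
      have "w $ (r!k0) = 1" using wr[OF k0(1)] t0 fk0 by (simp add: g_def t_def)
      then show "w \<noteq> 0" by (metis zero_index zero_neq_one)
      show "\<forall>j. v $ j = 0 \<or> v $ j = 1 \<longrightarrow> w $ j = 0" using w01 by blast
      show "\<forall>j. \<bar>w $ j\<bar> \<le> 1"
      proof
        fix j show "\<bar>w $ j\<bar> \<le> 1"
        proof (cases "j \<in> set r")
          case True
          then obtain k where k: "k < ?n" "r!k = j" by (auto simp: in_set_conv_nth)
          then show ?thesis using wr[OF k(1)] by (simp add: g_def)
        qed (simp add: woff)
      qed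
      show "\<forall>S\<in>DD. (\<Sum>j\<in>S. v $ j) = 1 \<longrightarrow> (\<Sum>j\<in>S. w $ j) = 0"
      proof (intro ballI impI)
        fix S assume SD: "S \<in> DD" and S1: "(\<Sum>j\<in>S. v $ j) = 1"
        obtain lo hi where lh: "lo \<le> hi" "hi < ?n" "(!) r ` {lo..hi} \<subseteq> S"
          "(\<Sum>k=lo..hi. v $ (r!k)) = 1" "\<forall>j\<in>S - (!) r ` {lo..hi}. v$j = 0"
          using tight[OF SD S1] by blast
        let ?G = "(!) r ` {lo..hi}"
        have "(\<Sum>j\<in>S. w$j) = (\<Sum>j\<in>?G. w$j) + (\<Sum>j\<in>S - ?G. w$j)"
          using lh(3) by (metis add.commute finite sum.subset_diff)
        also have "(\<Sum>j\<in>S - ?G. w$j) = 0" using lh(5) w01 by (intro sum.neutral) auto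
        also have "(\<Sum>j\<in>?G. w$j) = (\<Sum>k=lo..hi. w $ (r!k))"
          by (subst sum.reindex[OF inj[OF lh(2)]]) simp
        also have "\<dots> = (\<Sum>k=lo..hi. g (Suc k) - g k)" using lh(2) by (intro sum.cong) (auto simp: wr)
        also have "\<dots> = g (Suc hi) - g lo" using lh(1) by (intro sum_Suc_diff) simp
        also have "g (Suc hi) = g lo"
        proof -
          have "y (Suc hi) - y lo = (\<Sum>k=lo..hi. v $ (r!k))" unfolding y_def using lh(1)
            by (metis atLeastLessThanSuc_atLeastAtMost le_SucI lessThan_atLeast0 sum.atLeastLessThan_concat add_diff_cancel_left' zero_le)
          then have "frac (y (Suc hi) - y lo) = 0" using lh(4) by simp
          then have "frac (y (Suc hi)) = frac (y lo)" by (rule frac_diff_zero)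
          then show ?thesis by (simp add: g_def)
        qed
        finally show "(\<Sum>j\<in>S. w $ j) = 0" by simp
      qed
    qed
    then show False using ext by blast
  qed
qed

theorem lemma3:
  fixes A :: "('n::finite) set set"
    and len :: "'n set \<Rightarrow> real"
    and d :: real
    and Q :: "'q set"
    and R :: "'q \<Rightarrow> 'n list set"
    and D :: "'q \<Rightarrow> 'n list \<Rightarrow> 'n set set"
    and q :: 'q and r0 :: "'n list"
  assumes edges: "\<forall>e\<in>A. card e = 2"
    and len_pos: "\<forall>e\<in>A. len e > 0"
    and d_pos: "d > 0"
    and len_le: "\<forall>e\<in>A. len e \<le> d"
    and Q_fin: "finite Q"
    and R_fin: "\<forall>q\<in>Q. finite (R q) \<and> R q \<noteq> {}"
    and R_paths: "\<forall>q\<in>Q. \<forall>r\<in>R q. is_path A r"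
    and D_char: "\<forall>q\<in>Q. \<forall>r\<in>R q. \<forall>x. binary_vec x \<longrightarrow>
                   (rep_traversable len d r x \<longleftrightarrow> (\<forall>S\<in>D q r. (\<Sum>j\<in>S. x $ j) \<ge> 1))"
    and q_in: "q \<in> Q"
    and single: "R q = {r0}"
    and simple: "simple_node_path r0"
  shows "integral_polytope (U_poly (cover_family (R q) (D q)))"
  proof -
  have cf: "cover_family (R q) (D q) = D q r0" by (simp add: single cover_single)
  have "is_path A r0" using R_paths q_in single by auto
  then have n2: "length r0 \<ge> 2" by (simp add: is_path_def)
  have dist: "distinct r0" using simple by (simp add: simple_node_path_def)
  have Dc: "\<forall>x. binary_vec x \<longrightarrow> (rep_traversable len d r0 x \<longleftrightarrow> (\<forall>S\<in>D q r0. (\<Sum>j\<in>S. x $ j) \<ge> 1))"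
    using D_char q_in single by auto
  show ?thesis unfolding integral_polytope_def cf
    using main_integral[OF n2 dist Dc] by blast
qed

end
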